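(* Let $\lambda\subseteq T^*\mathbb{C}^d$ be a positive Lagrangian, let $\lambda_1=\{x\in\mathbb{C}^d:\exists\xi\in\mathbb{C}^d,\ (x,\xi)\in\lambda\}$, $k=\dim_{\mathbb{C}}\lambda_1$ and $N=d-k$. Then there exists a quadratic form $\rho$ on $\mathbb{R}^d$ (with complex coefficients, extended bilinearly to $\mathbb{C}^d$) with ${\rm Im}\,\rho\ge 0$ on $\mathbb{R}^d$, such that: if $k=d$ then $$\lambda=\{(x,\rho'(x)):\ x\in\mathbb{C}^d\},$$ while if $0\le k\le d-1$ there exists an injective real matrix $L\in\mathbb{R}^{d\times N}$ such that ${\rm Re}(\operatorname{Ran}\rho')$ and ${\rm Im}(\operatorname{Ran}\rho')$ are contained in $(\operatorname{Ran}L)^\perp\subseteq\mathbb{R}^d$ (where $\operatorname{Ran}\rho'=\{\rho'(x):x\in\mathbb{C}^d\}$ and $\operatorname{Ran}L=L\mathbb{R}^N$), and $$\lambda=\{(x,\rho'(x)+L\theta):\ (x,\theta)\in\mathbb{C}^{d+N},\ L^tx=0\}.$$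
   Context: $T^*\mathbb{C}^d\simeq\mathbb{C}^{2d}$ carries the canonical symplectic form $\sigma((x,\xi),(x',\xi'))=\langle x',\xi\rangle-\langle x,\xi'\rangle$, with $\langle\cdot,\cdot\rangle$ the bilinear form $\langle z,w\rangle=\sum z_jw_j$. A Lagrangian is a complex linear subspace $\lambda$ with $\lambda=\{X:\sigma(X,Y)=0\ \forall Y\in\lambda\}$; it is positive if $i\sigma(\overline X,X)\ge0$ for all $X\in\lambda$. $\rho'$ denotes the gradient of $\rho$. *)

theory Defs
  imports "HOL-Analysis.Analysis"
begin

text \<open>Points of T^*C^d are pairs (x, xi) of vectors in complex^'n, d = CARD('n).\<close>

definition bil :: "complex^'n \<Rightarrow> complex^'n \<Rightarrow> complex" where
  "bil z w = (\<Sum>j\<in>UNIV. z $ j * w $ j)"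

definition symp :: "((complex^'n) \<times> (complex^'n)) \<Rightarrow> ((complex^'n) \<times> (complex^'n)) \<Rightarrow> complex" where
  "symp X Y = bil (fst Y) (snd X) - bil (fst X) (snd Y)"

definition pscale :: "complex \<Rightarrow> ((complex^'n) \<times> (complex^'n)) \<Rightarrow> ((complex^'n) \<times> (complex^'n))" where
  "pscale c X = (c *s fst X, c *s snd X)"

definition cconj :: "complex^'n \<Rightarrow> complex^'n" where
  "cconj x = (\<chi> i. cnj (x $ i))"

definition lagrangian :: "((complex^'n) \<times> (complex^'n)) set \<Rightarrow> bool" where
  "lagrangian \<Lambda> \<longleftrightarrow> module.subspace pscale \<Lambda> \<and>
     \<Lambda> = {X. \<forall>Y\<in>\<Lambda>. symp X Y = 0}"

text \<open>i sigma(conj X, X) >= 0 in the sense of complex numbers: real and nonnegative.\<close>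
definition positive_lagrangian :: "((complex^'n) \<times> (complex^'n)) set \<Rightarrow> bool" where
  "positive_lagrangian \<Lambda> \<longleftrightarrow> lagrangian \<Lambda> \<and>
     (\<forall>X\<in>\<Lambda>. let z = \<i> * symp (cconj (fst X), cconj (snd X)) X in Im z = 0 \<and> 0 \<le> Re z)"

definition cdim :: "(complex^'n) set \<Rightarrow> nat" where
  "cdim S = vector_space.dim ((*s) :: complex \<Rightarrow> complex^'n \<Rightarrow> complex^'n) S"

definition quad :: "complex^'n^'n \<Rightarrow> complex^'n \<Rightarrow> complex" where
  "quad Q x = (\<Sum>i\<in>UNIV. \<Sum>j\<in>UNIV. Q $ i $ j * x $ i * x $ j)"

definition grad :: "complex^'n^'n \<Rightarrow> complex^'n \<Rightarrow> complex^'n" where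
  "grad Q x = (\<chi> i. \<Sum>j\<in>UNIV. (Q $ i $ j + Q $ j $ i) * x $ j)"

definition cvec :: "real^'n \<Rightarrow> complex^'n" where
  "cvec x = (\<chi> i. complex_of_real (x $ i))"

definition revec :: "complex^'n \<Rightarrow> real^'n" where
  "revec v = (\<chi> i. Re (v $ i))"

definition imvec :: "complex^'n \<Rightarrow> real^'n" where
  "imvec v = (\<chi> i. Im (v $ i))"

text \<open>A real d x N matrix L given by its list of N columns; applied to theta in R^N / C^N.\<close>
definition Lapp :: "(real^'n) list \<Rightarrow> real list \<Rightarrow> real^'n" where
  "Lapp L \<theta> = (\<Sum>j<length L. (\<theta> ! j) *\<^sub>R (L ! j))"

definition Lappc :: "(real^'n) list \<Rightarrow> complex list \<Rightarrow> complex^'n" where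
  "Lappc L \<theta> = (\<Sum>j<length L. (\<theta> ! j) *s cvec (L ! j))"

definition Ltrans :: "(real^'n) list \<Rightarrow> complex^'n \<Rightarrow> complex list" where
  "Ltrans L x = map (\<lambda>c. bil (cvec c) x) L"

definition RanL :: "(real^'n) list \<Rightarrow> (real^'n) set" where
  "RanL L = {Lapp L \<theta> | \<theta>. length \<theta> = length L}"

end

theory Submission
  imports Defs
begin


lemma module_pscale: "module (pscale :: complex \<Rightarrow> (complex^'n) \<times> (complex^'n) \<Rightarrow> _)"
  by unfold_locales (auto simp: pscale_def vec.scale_right_distrib vec.scale_left_distrib)

lemma subspace_pscale_iff: "module.subspace pscale S \<longleftrightarrow> 0 \<in> S \<and> (\<forall>x\<in>S. \<forall>y\<in>S. x + y \<in> S) \<and> (\<forall>c. \<forall>x\<in>S. pscale c x \<in> S)"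
  by (rule module.subspace_def[OF module_pscale])

lemma bil_add_right: "bil x (y + z) = bil x y + bil x z"
  by (simp add: bil_def distrib_left sum.distrib)
lemma bil_add_left: "bil (y + z) x = bil y x + bil z x"
  by (simp add: bil_def distrib_right sum.distrib)
lemma bil_diff_right: "bil x (y - z) = bil x y - bil x z"
  by (simp add: bil_def right_diff_distrib sum_subtractf)
lemma bil_diff_left: "bil (y - z) x = bil y x - bil z x"
  by (simp add: bil_def left_diff_distrib sum_subtractf)
lemma bil_scale_right: "bil x (c *s y) = c * bil x y"
  by (simp add: bil_def sum_distrib_left mult.assoc mult.left_commute)
lemma bil_scale_left: "bil (c *s y) x = c * bil y x"
  by (simp add: bil_def sum_distrib_left mult.assoc mult.left_commute)
lemma bil_sym: "bil x y = bil y x"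
  by (simp add: bil_def mult.commute)
lemma bil_zero_left[simp]: "bil 0 x = 0" and bil_zero_right[simp]: "bil x 0 = 0"
  by (simp_all add: bil_def)
lemma bil_sum_right: "bil x (\<Sum>a\<in>A. f a) = (\<Sum>a\<in>A. bil x (f a))"
  by (induction A rule: infinite_finite_induct) (auto simp: bil_add_right)
lemma bil_sum_left: "bil (\<Sum>a\<in>A. f a) x = (\<Sum>a\<in>A. bil (f a) x)"
  by (induction A rule: infinite_finite_induct) (auto simp: bil_add_left)

lemma cconj_cconj[simp]: "cconj (cconj x) = x"
  by (simp add: cconj_def vec_eq_iff)
lemma bil_cconj: "bil (cconj x) (cconj y) = cnj (bil x y)"
  by (simp add: bil_def cconj_def)
lemma bil_cconj_self_zero: assumes "bil x (cconj x) = 0" shows "x = 0"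
proof -
  have "Re (bil x (cconj x)) = (\<Sum>j\<in>UNIV. (Re (x$j))\<^sup>2 + (Im (x$j))\<^sup>2)"
    by (simp add: bil_def cconj_def power2_eq_square)
  hence "(\<Sum>j\<in>UNIV. (Re (x$j))\<^sup>2 + (Im (x$j))\<^sup>2) = 0" using assms by simp
  hence "\<forall>j\<in>UNIV. (Re (x$j))\<^sup>2 + (Im (x$j))\<^sup>2 = 0"
    by (subst (asm) sum_nonneg_eq_0_iff) auto
  thus ?thesis by (simp add: vec_eq_iff complex_eq_iff)
qed

lemma cvec_revec_imvec: "x = cvec (revec x) + \<i> *s cvec (imvec x)"
  by (simp add: vec_eq_iff cvec_def revec_def imvec_def complex_eq_iff)

lemma bil_cvec: "bil (cvec r) x = of_real (inner r (revec x)) + \<i> * of_real (inner r (imvec x))"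
  by (simp add: bil_def cvec_def revec_def imvec_def inner_vec_def complex_eq_iff)

lemma bil_cvec_cvec: "bil (cvec a) (cvec b) = of_real (inner a b)"
  by (simp add: bil_def cvec_def inner_vec_def)

lemma inner_bil: "inner q w = Re (bil (cconj q) w)"
  by (simp add: inner_vec_def bil_def cconj_def inner_complex_def)

lemma cvec_add: "cvec (a + b) = cvec a + cvec b" by (simp add: cvec_def vec_eq_iff)
lemma cvec_scaleR: "cvec (c *\<^sub>R a) = of_real c *s cvec a" by (simp add: cvec_def vec_eq_iff)
lemma cvec_zero[simp]: "cvec 0 = 0" by (simp add: cvec_def vec_eq_iff)
lemma cvec_sum: "cvec (\<Sum>a\<in>A. f a) = (\<Sum>a\<in>A. cvec (f a))"
  by (induction A rule: infinite_finite_induct) (auto simp: cvec_add)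
lemma cvec_inj: "inj cvec" by (rule injI) (simp add: cvec_def vec_eq_iff)
lemma cconj_cvec[simp]: "cconj (cvec a) = cvec a" by (simp add: cvec_def cconj_def vec_eq_iff)
lemma revec_cvec[simp]: "revec (cvec a) = a" by (simp add: cvec_def revec_def vec_eq_iff)
lemma imvec_cvec[simp]: "imvec (cvec a) = 0" by (simp add: cvec_def imvec_def vec_eq_iff)
lemma scaleR_cvec_eq: "c *\<^sub>R (x::complex^'n) = of_real c *s x"
  by (simp add: vec_eq_iff complex_eq_iff)

lemma cvec_re_eq: "cvec (revec x) = (1/2) *s (x + cconj x)"
  by (simp add: vec_eq_iff cvec_def revec_def cconj_def complex_eq_iff)
lemma cvec_im_eq: "cvec (imvec x) = (-\<i>/2) *s (x - cconj x)"
  by (simp add: vec_eq_iff cvec_def imvec_def cconj_def complex_eq_iff)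




locale PL =
  fixes Lam :: "((complex^'n) \<times> (complex^'n)) set"
  assumes posL: "positive_lagrangian Lam"
begin

lemma lagr: "lagrangian Lam" using posL unfolding positive_lagrangian_def by (rule conjunct1)
lemma subsp: "module.subspace pscale Lam" using lagr unfolding lagrangian_def by (rule conjunct1)
lemma lageq: "Lam = {X. \<forall>Y\<in>Lam. symp X Y = 0}" using lagr unfolding lagrangian_def by (rule conjunct2)
lemma posdef: "\<forall>X\<in>Lam. let z = \<i> * symp (cconj (fst X), cconj (snd X)) X in Im z = 0 \<and> 0 \<le> Re z"
  using posL unfolding positive_lagrangian_def by (rule conjunct2)

lemma sub0: "0 \<in> Lam" and subadd: "X \<in> Lam \<Longrightarrow> Y \<in> Lam \<Longrightarrow> X + Y \<in> Lam"
  and subscale: "X \<in> Lam \<Longrightarrow> pscale c X \<in> Lam"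
  using subsp unfolding subspace_pscale_iff by blast+

lemma lag: "X \<in> Lam \<longleftrightarrow> (\<forall>Y\<in>Lam. symp X Y = 0)"
proof -
  have "X \<in> Lam \<longleftrightarrow> X \<in> {X. \<forall>Y\<in>Lam. symp X Y = 0}" by (rule arg_cong[where f="\<lambda>S. X \<in> S", OF lageq])
  thus ?thesis by (simp only: mem_Collect_eq)
qed

lemma pairadd: "(x,a) \<in> Lam \<Longrightarrow> (y,b) \<in> Lam \<Longrightarrow> (x+y, a+b) \<in> Lam"
  using subadd by fastforce
lemma pairscale: "(x,a) \<in> Lam \<Longrightarrow> (c *s x, c *s a) \<in> Lam"
  using subscale[of "(x,a)" c] by (simp add: pscale_def)
lemma pairdiff: "(x,a) \<in> Lam \<Longrightarrow> (y,b) \<in> Lam \<Longrightarrow> (x-y, a-b) \<in> Lam"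
  using pairadd[of x a "(-1) *s y" "(-1) *s b"] pairscale[of y b "-1"] by simp

lemma pairsum: "finite A \<Longrightarrow> (\<And>a. a \<in> A \<Longrightarrow> (f a, g a) \<in> Lam) \<Longrightarrow> (\<Sum>a\<in>A. f a, \<Sum>a\<in>A. g a) \<in> Lam"
proof (induction A rule: finite_induct)
  case empty then show ?case using sub0 by (simp add: zero_prod_def)
next
  case (insert a A) then show ?case using pairadd by simp
qed

lemma posIm: "(z,w) \<in> Lam \<Longrightarrow> 0 \<le> Im (bil (cconj z) w)"
proof -
  assume a: "(z,w) \<in> Lam"
  let ?u = "bil (cconj z) w"
  have "bil z (cconj w) = cnj ?u" using bil_cconj[of "cconj z" w] by simp
  hence "symp (cconj z, cconj w) (z,w) = cnj ?u - ?u" by (simp add: symp_def)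
  moreover have "0 \<le> Re (\<i> * symp (cconj z, cconj w) (z,w))"
    using posdef a unfolding Let_def by fastforce
  ultimately show ?thesis by simp
qed

definition "l1 = fst ` Lam"
definition "F = {\<xi>. (0,\<xi>) \<in> Lam}"

lemma l1_iff: "x \<in> l1 \<longleftrightarrow> (\<exists>\<eta>. (x,\<eta>) \<in> Lam)"
  unfolding l1_def by force

lemma F_ann: "\<xi> \<in> F \<longleftrightarrow> (\<forall>x\<in>l1. bil x \<xi> = 0)"
proof -
  have "\<xi> \<in> F \<longleftrightarrow> (\<forall>Y\<in>Lam. symp (0,\<xi>) Y = 0)" unfolding F_def using lag by blast
  also have "\<dots> \<longleftrightarrow> (\<forall>x\<in>l1. bil x \<xi> = 0)"
    unfolding l1_def symp_def by force
  finally show ?thesis .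
qed

lemma l1_F: "x \<in> l1 \<Longrightarrow> \<xi> \<in> F \<Longrightarrow> bil x \<xi> = 0"
  using F_ann by blast

lemma F_add: "a \<in> F \<Longrightarrow> b \<in> F \<Longrightarrow> a + b \<in> F"
  unfolding F_def using pairadd by fastforce
lemma F_scale: "a \<in> F \<Longrightarrow> c *s a \<in> F"
  unfolding F_def using pairscale by fastforce
lemma F_diff: "a \<in> F \<Longrightarrow> b \<in> F \<Longrightarrow> a - b \<in> F"
  unfolding F_def using pairdiff by fastforce
lemma F_0: "0 \<in> F"
  unfolding F_def using sub0 by (simp add: zero_prod_def)
lemma F_sum: "finite A \<Longrightarrow> (\<And>a. a \<in> A \<Longrightarrow> f a \<in> F) \<Longrightarrow> (\<Sum>a\<in>A. f a) \<in> F"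
  by (induction A rule: finite_induct) (auto intro: F_0 F_add)

lemma l1_add: "a \<in> l1 \<Longrightarrow> b \<in> l1 \<Longrightarrow> a + b \<in> l1"
  unfolding l1_iff using pairadd by blast
lemma l1_scale: "a \<in> l1 \<Longrightarrow> c *s a \<in> l1"
  unfolding l1_iff using pairscale by blast
lemma l1_0: "0 \<in> l1"
  unfolding l1_iff using sub0 by (auto simp: zero_prod_def)
lemma l1_sum: "finite A \<Longrightarrow> (\<And>a. a \<in> A \<Longrightarrow> f a \<in> l1) \<Longrightarrow> (\<Sum>a\<in>A. f a) \<in> l1"
  by (induction A rule: finite_induct) (auto intro: l1_0 l1_add)

lemma F_conj: assumes "\<xi> \<in> F" shows "cconj \<xi> \<in> F"
proof -
  have "bil (cconj x) \<xi> = 0" if xl: "x \<in> l1" for x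
  proof (rule ccontr)
    assume nz: "bil (cconj x) \<xi> \<noteq> 0"
    obtain \<eta> where xe: "(x,\<eta>) \<in> Lam" using xl l1_iff[of x] by blast
    let ?w = "bil (cconj x) \<xi>"
    let ?c = "Im (bil (cconj x) \<eta>)"
    define t where "t = - complex_of_real (?c + 1) * \<i> / ?w"
    have ps: "(0, t *s \<xi>) \<in> Lam" using pairscale[of 0 \<xi> t] assms unfolding F_def by simp
    have "(x, \<eta> + t *s \<xi>) \<in> Lam" using pairadd[OF xe ps] by simp
    hence h1: "0 \<le> Im (bil (cconj x) (\<eta> + t *s \<xi>))" by (rule posIm)
    have h2: "bil (cconj x) (\<eta> + t *s \<xi>) = bil (cconj x) \<eta> + t * ?w"
      by (simp only: bil_add_right bil_scale_right)
    have h3: "t * ?w = - complex_of_real (?c + 1) * \<i>" unfolding t_def using nz by simp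
    have "0 \<le> Im (bil (cconj x) \<eta> + - complex_of_real (?c + 1) * \<i>)" using h1 unfolding h2 h3 .
    thus False by simp
  qed
  hence "bil x (cconj \<xi>) = 0" if "x \<in> l1" for x
    using that bil_cconj[of "cconj x" \<xi>] by auto
  thus ?thesis using F_ann[of "cconj \<xi>"] by blast
qed

lemma l1_ann: "x \<in> l1 \<longleftrightarrow> (\<forall>\<xi>\<in>F. bil x \<xi> = 0)"
proof
  assume "x \<in> l1" thus "\<forall>\<xi>\<in>F. bil x \<xi> = 0" using l1_F by blast
next
  assume z: "\<forall>\<xi>\<in>F. bil x \<xi> = 0"
  have sl1: "subspace l1"
    unfolding subspace_def using l1_0 l1_add l1_scale by (auto simp: scaleR_cvec_eq)
  obtain p q where p: "p \<in> span l1" and q: "\<And>w. w \<in> span l1 \<Longrightarrow> orthogonal q w" and xpq: "x = p + q"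
    using orthogonal_subspace_decomp_exists[of l1 x] by metis
  have pl: "p \<in> l1" using p sl1 by (metis span_eq_iff)
  have "bil w (cconj q) = 0" if w: "w \<in> l1" for w
  proof -
    have "orthogonal q w" "orthogonal q (\<i> *s w)" using q w l1_scale span_base by blast+
    hence "Re (bil (cconj q) w) = 0" "Re (bil (cconj q) (\<i> *s w)) = 0"
      by (simp_all add: orthogonal_def inner_bil)
    hence "bil (cconj q) w = 0" by (simp add: bil_scale_right complex_eq_iff)
    thus ?thesis by (simp add: bil_sym)
  qed
  hence "cconj q \<in> F" using F_ann by blast
  hence qF: "q \<in> F" using F_conj by fastforce
  have "bil q (cconj q) = 0"
  proof -
    have "bil q (cconj q) = bil x (cconj q) - bil p (cconj q)" using xpq by (simp add: bil_add_left)
    also have "\<dots> = 0" using z \<open>cconj q \<in> F\<close> l1_F[OF pl \<open>cconj q \<in> F\<close>] by simp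
    finally show ?thesis .
  qed
  hence "q = 0" by (rule bil_cconj_self_zero)
  thus "x \<in> l1" using xpq pl by simp
qed

end



lemma revec_nth[simp]: "revec x $ i = Re (x $ i)" by (simp add: revec_def)
lemma imvec_nth[simp]: "imvec x $ i = Im (x $ i)" by (simp add: imvec_def)
lemma cvec_nth[simp]: "cvec x $ i = complex_of_real (x $ i)" by (simp add: cvec_def)

context PL begin

definition "FR = {r. cvec r \<in> F}"
definition "VR = {v. \<forall>r\<in>FR. orthogonal r v}"

lemma FR_subspace: "subspace FR"
  unfolding subspace_def FR_def
  by (auto simp: cvec_add cvec_scaleR intro: F_add F_scale F_0)

lemma VR_subspace: "subspace VR"
  unfolding subspace_def VR_def orthogonal_def by (auto simp: inner_add_right)

lemma F_char: "\<xi> \<in> F \<longleftrightarrow> revec \<xi> \<in> FR \<and> imvec \<xi> \<in> FR"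
proof
  assume a: "\<xi> \<in> F"
  have "cconj \<xi> \<in> F" using F_conj[OF a] .
  thus "revec \<xi> \<in> FR \<and> imvec \<xi> \<in> FR"
    unfolding FR_def using a by (simp add: cvec_re_eq cvec_im_eq F_add F_diff F_scale)
next
  assume "revec \<xi> \<in> FR \<and> imvec \<xi> \<in> FR"
  hence "cvec (revec \<xi>) + \<i> *s cvec (imvec \<xi>) \<in> F" unfolding FR_def by (auto intro: F_add F_scale)
  thus "\<xi> \<in> F" using cvec_revec_imvec[of \<xi>] by simp
qed

lemma l1_char: "x \<in> l1 \<longleftrightarrow> revec x \<in> VR \<and> imvec x \<in> VR"
proof
  assume a: "x \<in> l1"
  have "inner r (revec x) = 0 \<and> inner r (imvec x) = 0" if "r \<in> FR" for r
  proof -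
    have "bil x (cvec r) = 0" using l1_F[OF a] that unfolding FR_def by simp
    hence "bil (cvec r) x = 0" by (simp add: bil_sym)
    thus ?thesis unfolding bil_cvec by (simp add: complex_eq_iff)
  qed
  thus "revec x \<in> VR \<and> imvec x \<in> VR" unfolding VR_def orthogonal_def by auto
next
  assume a: "revec x \<in> VR \<and> imvec x \<in> VR"
  have "bil x \<xi> = 0" if "\<xi> \<in> F" for \<xi>
  proof -
    have r: "revec \<xi> \<in> FR" "imvec \<xi> \<in> FR" using that F_char by auto
    have "bil x \<xi> = bil (cvec (revec \<xi>)) x + \<i> * bil (cvec (imvec \<xi>)) x"
      by (subst cvec_revec_imvec[of \<xi>]) (simp add: bil_add_right bil_scale_right bil_sym)
    also have "\<dots> = 0" using a r unfolding VR_def orthogonal_def bil_cvec by simp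
    finally show ?thesis .
  qed
  thus "x \<in> l1" using l1_ann[of x] by blast
qed

lemma dimsum: "dim VR + dim FR = CARD('n)"
proof -
  have "{y \<in> UNIV. \<forall>x \<in> FR. orthogonal x y} = VR" unfolding VR_def by auto
  thus ?thesis using dim_subspace_orthogonal_to_vectors[OF FR_subspace subspace_UNIV] by simp
qed

definition "B = (SOME B. B \<subseteq> VR \<and> pairwise orthogonal B \<and> (\<forall>x\<in>B. norm x = 1) \<and> independent B \<and> card B = dim VR \<and> span B = VR)"

lemma B_props: "B \<subseteq> VR" "pairwise orthogonal B" "\<And>x. x\<in>B \<Longrightarrow> norm x = 1" "independent B"
  "card B = dim VR" "span B = VR" "finite B"
proof -
  obtain B0 where "B0 \<subseteq> VR" "pairwise orthogonal B0" "\<And>x. x \<in> B0 \<Longrightarrow> norm x = 1"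
     "independent B0" "card B0 = dim VR" "span B0 = VR"
    using orthonormal_basis_subspace[OF VR_subspace] by metis
  hence "B0 \<subseteq> VR \<and> pairwise orthogonal B0 \<and> (\<forall>x\<in>B0. norm x = 1) \<and> independent B0 \<and> card B0 = dim VR \<and> span B0 = VR"
    by blast
  hence h: "B \<subseteq> VR \<and> pairwise orthogonal B \<and> (\<forall>x\<in>B. norm x = 1) \<and> independent B \<and> card B = dim VR \<and> span B = VR"
    unfolding B_def by (rule someI)
  thus "B \<subseteq> VR" "pairwise orthogonal B" "\<And>x. x\<in>B \<Longrightarrow> norm x = 1" "independent B"
    "card B = dim VR" "span B = VR" by auto
  thus "finite B" using independent_imp_finite by blast
qed

lemma B_inner: "b \<in> B \<Longrightarrow> c \<in> B \<Longrightarrow> inner b c = (if b = c then 1 else 0)"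
proof -
  assume bc: "b \<in> B" "c \<in> B"
  show ?thesis
  proof (cases "b = c")
    case True
    have "norm b = 1" using B_props(3) bc by blast
    hence "inner b b = 1" by (simp add: norm_eq_sqrt_inner)
    thus ?thesis using True by simp
  next
    case False
    thus ?thesis using B_props(2) bc unfolding pairwise_def orthogonal_def by auto
  qed
qed

lemma VR_expand: assumes "v \<in> VR" shows "v = (\<Sum>b\<in>B. inner b v *\<^sub>R b)"
proof -
  have "v \<in> span B" using assms B_props(6) by simp
  then obtain u where u: "v = (\<Sum>b\<in>B. u b *\<^sub>R b)"
    using real_vector.span_finite[OF B_props(7)] by auto
  have "inner c v = u c" if "c \<in> B" for c
  proof -
    have "inner c v = (\<Sum>b\<in>B. u b * inner c b)" unfolding u by (simp add: inner_sum_right)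
    also have "\<dots> = (\<Sum>b\<in>B. if b = c then u b else 0)"
      by (rule sum.cong) (auto simp: B_inner that)
    also have "\<dots> = u c" using that B_props(7) by simp
    finally show ?thesis .
  qed
  thus ?thesis unfolding u by (intro sum.cong) auto
qed

lemma l1_expand: assumes "x \<in> l1" shows "x = (\<Sum>b\<in>B. bil (cvec b) x *s cvec b)"
proof -
  have re: "revec x = (\<Sum>b\<in>B. inner b (revec x) *\<^sub>R b)" and im: "imvec x = (\<Sum>b\<in>B. inner b (imvec x) *\<^sub>R b)"
    using assms l1_char VR_expand by auto
  show ?thesis
  proof (subst vec_eq_iff, intro allI)
    fix i
    have r: "Re (x $ i) = (\<Sum>b\<in>B. inner b (revec x) * b $ i)"
      using arg_cong[OF re, of "\<lambda>v. v $ i"] by (simp add: sum_component)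
    have m: "Im (x $ i) = (\<Sum>b\<in>B. inner b (imvec x) * b $ i)"
      using arg_cong[OF im, of "\<lambda>v. v $ i"] by (simp add: sum_component)
    show "x $ i = (\<Sum>b\<in>B. bil (cvec b) x *s cvec b) $ i"
      using r m by (simp add: sum_component complex_eq_iff bil_cvec Re_sum Im_sum)
  qed
qed

lemma cvecB_l1: "cvec ` B \<subseteq> l1"
  using B_props(1) l1_char by (auto simp: VR_def orthogonal_def)

lemma cdim_l1: "cdim l1 = dim VR"
proof -
  have inj: "inj_on cvec B" using cvec_inj by (meson inj_on_subset subset_UNIV)
  have sp: "l1 \<subseteq> vec.span (cvec ` B)"
  proof
    fix x assume "x \<in> l1"
    hence "x = (\<Sum>b\<in>B. bil (cvec b) x *s cvec b)" by (rule l1_expand)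
    also have "\<dots> \<in> vec.span (cvec ` B)"
      by (intro vec.span_sum vec.span_scale vec.span_base) auto
    finally show "x \<in> vec.span (cvec ` B)" .
  qed
  have ind: "vec.independent (cvec ` B)"
    unfolding vec.independent_explicit
  proof (intro conjI allI impI ballI)
    show "finite (cvec ` B)" using B_props(7) by simp
    fix c v assume s: "(\<Sum>v\<in>cvec ` B. c v *s v) = 0" and v: "v \<in> cvec ` B"
    then obtain b0 where b0: "b0 \<in> B" "v = cvec b0" by auto
    have "0 = bil (cvec b0) (\<Sum>v\<in>cvec ` B. c v *s v)" using s by simp
    also have "\<dots> = (\<Sum>b\<in>B. c (cvec b) * of_real (inner b0 b))"
      by (simp add: sum.reindex[OF inj] bil_sum_right bil_scale_right bil_cvec_cvec)
    also have "\<dots> = (\<Sum>b\<in>B. if b = b0 then c (cvec b) else 0)"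
      by (rule sum.cong) (auto simp: B_inner b0)
    also have "\<dots> = c v" using b0 B_props(7) by simp
    finally show "c v = 0" by simp
  qed
  have "card (cvec ` B) = vec.dim l1" using vec.basis_card_eq_dim[OF cvecB_l1 sp ind] .
  hence "vec.dim l1 = card B" using card_image[OF inj] by simp
  thus ?thesis unfolding cdim_def using B_props(5) by simp
qed

end



lemma sum_swap3: "(\<Sum>j\<in>J. \<Sum>b\<in>B. \<Sum>c\<in>C. f j b c) = (\<Sum>b\<in>B. \<Sum>c\<in>C. \<Sum>j\<in>J. f j b c)"
proof -
  have "(\<Sum>j\<in>J. \<Sum>b\<in>B. \<Sum>c\<in>C. f j b c) = (\<Sum>b\<in>B. \<Sum>j\<in>J. \<Sum>c\<in>C. f j b c)" by (rule sum.swap)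
  also have "\<dots> = (\<Sum>b\<in>B. \<Sum>c\<in>C. \<Sum>j\<in>J. f j b c)" by (rule sum.cong[OF refl], rule sum.swap)
  finally show ?thesis .
qed

lemma aux4: "(\<Sum>i\<in>UNIV. \<Sum>j\<in>UNIV. m * (complex_of_real (c$i) * complex_of_real (b$j)) * complex_of_real (r$i) * complex_of_real (r$j))
   = m * (complex_of_real (inner c r) * complex_of_real (inner b (r::real^'n)))"
proof -
  have ic: "complex_of_real (inner c r) = (\<Sum>i\<in>UNIV. complex_of_real (c$i) * complex_of_real (r$i))"
    by (simp add: inner_vec_def)
  have ib: "complex_of_real (inner b r) = (\<Sum>j\<in>UNIV. complex_of_real (b$j) * complex_of_real (r$j))"
    by (simp add: inner_vec_def)
  have "m * (complex_of_real (inner c r) * complex_of_real (inner b r)) =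
     m * (\<Sum>i\<in>UNIV. \<Sum>j\<in>UNIV. (complex_of_real (c$i) * complex_of_real (r$i)) * (complex_of_real (b$j) * complex_of_real (r$j)))"
    unfolding ic ib by (simp only: sum_product)
  also have "\<dots> = (\<Sum>i\<in>UNIV. \<Sum>j\<in>UNIV. m * ((complex_of_real (c$i) * complex_of_real (r$i)) * (complex_of_real (b$j) * complex_of_real (r$j))))"
    by (simp only: sum_distrib_left)
  also have "\<dots> = (\<Sum>i\<in>UNIV. \<Sum>j\<in>UNIV. m * (complex_of_real (c$i) * complex_of_real (b$j)) * complex_of_real (r$i) * complex_of_real (r$j))"
    by (intro sum.cong refl) (simp add: mult_ac)
  finally show ?thesis by simp
qed

context PL begin

definition "xi b = (SOME \<eta>. (cvec b, \<eta>) \<in> Lam)"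
definition "M c b = bil (cvec c) (xi b)"
definition "G x = (\<Sum>b\<in>B. \<Sum>c\<in>B. (M c b * bil (cvec b) x) *s cvec c)"
definition "Qm = (\<chi> i j. \<Sum>b\<in>B. \<Sum>c\<in>B. M c b / 2 * (complex_of_real (c$i) * complex_of_real (b$j)))"

lemma xi_in: "b \<in> B \<Longrightarrow> (cvec b, xi b) \<in> Lam"
proof -
  assume "b \<in> B"
  hence "cvec b \<in> l1" using cvecB_l1 by blast
  hence "\<exists>\<eta>. (cvec b, \<eta>) \<in> Lam" using l1_iff[of "cvec b"] by blast
  thus ?thesis unfolding xi_def by (rule someI_ex)
qed

lemma M_sym: "b \<in> B \<Longrightarrow> c \<in> B \<Longrightarrow> M c b = M b c"
proof -
  assume bc: "b \<in> B" "c \<in> B"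
  have "symp (cvec b, xi b) (cvec c, xi c) = 0" using lag[of "(cvec b, xi b)"] xi_in bc by blast
  thus ?thesis unfolding symp_def M_def by simp
qed

lemma comb_in: assumes "x \<in> l1" shows "(x, \<Sum>b\<in>B. bil (cvec b) x *s xi b) \<in> Lam"
proof -
  have "(\<Sum>b\<in>B. bil (cvec b) x *s cvec b, \<Sum>b\<in>B. bil (cvec b) x *s xi b) \<in> Lam"
    using B_props(7) by (rule pairsum) (intro pairscale xi_in)
  thus ?thesis using l1_expand[OF assms] by simp
qed

lemma diffF: assumes xl: "x \<in> l1" shows "(\<Sum>b\<in>B. bil (cvec b) x *s xi b) - G x \<in> F"
proof -
  have "bil y ((\<Sum>b\<in>B. bil (cvec b) x *s xi b) - G x) = 0" if yl: "y \<in> l1" for y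
  proof -
    have e1: "bil y (xi b) = (\<Sum>c\<in>B. bil (cvec c) y * M c b)" for b
    proof -
      have "bil y (xi b) = bil (\<Sum>c\<in>B. bil (cvec c) y *s cvec c) (xi b)"
        using arg_cong[OF l1_expand[OF yl], of "\<lambda>z. bil z (xi b)"] .
      also have "\<dots> = (\<Sum>c\<in>B. bil (cvec c) y * M c b)" by (simp add: bil_sum_left bil_scale_left M_def)
      finally show ?thesis .
    qed
    have "bil y (\<Sum>b\<in>B. bil (cvec b) x *s xi b) = (\<Sum>b\<in>B. \<Sum>c\<in>B. bil (cvec b) x * (bil (cvec c) y * M c b))"
      by (simp add: bil_sum_right bil_scale_right e1 sum_distrib_left)
    moreover have "bil y (G x) = (\<Sum>b\<in>B. \<Sum>c\<in>B. bil (cvec b) x * (bil (cvec c) y * M c b))"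
    proof -
      have bs: "bil y (cvec c) = bil (cvec c) y" for c by (rule bil_sym)
      show ?thesis unfolding G_def by (simp add: bil_sum_right bil_scale_right bs mult_ac)
    qed
    ultimately show ?thesis by (simp add: bil_diff_right)
  qed
  thus ?thesis using F_ann[of "(\<Sum>b\<in>B. bil (cvec b) x *s xi b) - G x"] by blast
qed

lemma Lam_char: "Lam = {(x, G x + f) | x f. x \<in> l1 \<and> f \<in> F}"
proof (intro set_eqI iffI)
  fix X assume X: "X \<in> Lam"
  obtain x \<xi> where X2: "X = (x, \<xi>)" by (cases X)
  have X': "(x,\<xi>) \<in> Lam" using X X2 by simp
  have xl: "x \<in> l1" using X' l1_iff[of x] by blast
  let ?S = "\<Sum>b\<in>B. bil (cvec b) x *s xi b"
  have "(x - x, \<xi> - ?S) \<in> Lam" using pairdiff[OF X' comb_in[OF xl]] .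
  hence "\<xi> - ?S \<in> F" unfolding F_def by simp
  hence "(\<xi> - ?S) + (?S - G x) \<in> F" using diffF[OF xl] F_add by blast
  hence "\<xi> - G x \<in> F" by simp
  moreover have "\<xi> = G x + (\<xi> - G x)" by simp
  ultimately show "X \<in> {(x, G x + f) | x f. x \<in> l1 \<and> f \<in> F}" using X2 xl by blast
next
  fix X assume "X \<in> {(x, G x + f) | x f. x \<in> l1 \<and> f \<in> F}"
  then obtain x f where X: "X = (x, G x + f)" and xl: "x \<in> l1" and fF: "f \<in> F" by blast
  let ?S = "\<Sum>b\<in>B. bil (cvec b) x *s xi b"
  have "f - (?S - G x) \<in> F" using F_diff[OF fF diffF[OF xl]] .
  hence "(0, f - (?S - G x)) \<in> Lam" unfolding F_def by simp
  from pairadd[OF comb_in[OF xl] this] show "X \<in> Lam" using X by (simp add: add.commute)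
qed

lemma Qm_sym: "Qm $ j $ i = Qm $ i $ j"
proof -
  have "Qm $ j $ i = (\<Sum>b\<in>B. \<Sum>c\<in>B. M c b / 2 * (complex_of_real (c$j) * complex_of_real (b$i)))"
    by (simp add: Qm_def)
  also have "\<dots> = (\<Sum>c\<in>B. \<Sum>b\<in>B. M c b / 2 * (complex_of_real (c$j) * complex_of_real (b$i)))"
    by (rule sum.swap)
  also have "\<dots> = (\<Sum>c\<in>B. \<Sum>b\<in>B. M b c / 2 * (complex_of_real (b$i) * complex_of_real (c$j)))"
    by (intro sum.cong refl) (metis M_sym mult.commute)
  also have "\<dots> = Qm $ i $ j" by (simp add: Qm_def)
  finally show ?thesis .
qed

lemma grad_Qm: "grad Qm x = G x"
proof (subst vec_eq_iff, intro allI)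
  fix i
  have "grad Qm x $ i = (\<Sum>j\<in>UNIV. (2 * Qm $ i $ j) * x $ j)"
    unfolding grad_def by (simp add: Qm_sym[of i])
  also have "\<dots> = (\<Sum>j\<in>UNIV. \<Sum>b\<in>B. \<Sum>c\<in>B. M c b * complex_of_real (c$i) * (complex_of_real (b$j) * x $ j))"
    unfolding Qm_def by (simp add: sum_distrib_left sum_distrib_right mult_ac)
  also have "\<dots> = (\<Sum>b\<in>B. \<Sum>c\<in>B. \<Sum>j\<in>UNIV. M c b * complex_of_real (c$i) * (complex_of_real (b$j) * x $ j))"
    by (rule sum_swap3)
  also have "\<dots> = G x $ i"
    unfolding G_def by (simp add: sum_component bil_def cvec_def sum_distrib_left mult_ac)
  finally show "grad Qm x $ i = G x $ i" .
qed

lemma quad_pos: "0 \<le> Im (quad Qm (cvec r))"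
proof -
  let ?A = "\<Sum>b\<in>B. complex_of_real (inner b r) *s cvec b"
  let ?S = "\<Sum>b\<in>B. complex_of_real (inner b r) *s xi b"
  have AS: "(?A, ?S) \<in> Lam"
    using B_props(7) by (rule pairsum) (intro pairscale xi_in)
  have "?A = cvec (\<Sum>b\<in>B. inner b r *\<^sub>R b)" by (simp add: cvec_sum cvec_scaleR)
  hence cA: "cconj ?A = ?A" by simp
  have "0 \<le> Im (bil (cconj ?A) ?S)" using posIm[OF AS] .
  hence p: "0 \<le> Im (bil ?A ?S)" using cA by simp
  have e1: "bil ?A ?S = (\<Sum>b\<in>B. \<Sum>c\<in>B. complex_of_real (inner b r) * (complex_of_real (inner c r) * M c b))"
    by (simp add: bil_sum_left bil_sum_right bil_scale_left bil_scale_right M_def sum_distrib_left)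
  have "quad Qm (cvec r) = (\<Sum>i\<in>UNIV. \<Sum>j\<in>UNIV. \<Sum>b\<in>B. \<Sum>c\<in>B. M c b / 2 * (complex_of_real (c$i) * complex_of_real (b$j)) * complex_of_real (r$i) * complex_of_real (r$j))"
    unfolding quad_def Qm_def by (simp add: sum_distrib_right)
  also have "\<dots> = (\<Sum>i\<in>UNIV. \<Sum>b\<in>B. \<Sum>c\<in>B. \<Sum>j\<in>UNIV. M c b / 2 * (complex_of_real (c$i) * complex_of_real (b$j)) * complex_of_real (r$i) * complex_of_real (r$j))"
    by (rule sum.cong[OF refl], rule sum_swap3)
  also have "\<dots> = (\<Sum>b\<in>B. \<Sum>c\<in>B. \<Sum>i\<in>UNIV. \<Sum>j\<in>UNIV. M c b / 2 * (complex_of_real (c$i) * complex_of_real (b$j)) * complex_of_real (r$i) * complex_of_real (r$j))"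
    by (rule sum_swap3)
  also have "\<dots> = (\<Sum>b\<in>B. \<Sum>c\<in>B. M c b / 2 * (complex_of_real (inner c r) * complex_of_real (inner b r)))"
    by (intro sum.cong refl aux4)
  also have "\<dots> = bil ?A ?S / 2"
    unfolding e1 by (simp add: sum_divide_distrib mult_ac)
  finally have q: "quad Qm (cvec r) = bil ?A ?S / 2" .
  have "Im (quad Qm (cvec r)) = Im (bil ?A ?S) / 2" unfolding q by simp
  thus ?thesis using p by simp
qed

end



lemma map_eq_replicate_iff: "map f xs = replicate (length xs) 0 \<longleftrightarrow> (\<forall>v\<in>set xs. f v = 0)"
  by (induction xs) auto

context PL begin

definition "Cb = (SOME C. C \<subseteq> FR \<and> independent C \<and> FR \<subseteq> span C \<and> card C = dim FR)"

lemma C_props: "Cb \<subseteq> FR" "independent Cb" "span Cb = FR" "card Cb = dim FR" "finite Cb"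
proof -
  obtain C0 where "C0 \<subseteq> FR" "independent C0" "FR \<subseteq> span C0" "card C0 = dim FR"
    using real_vector.basis_exists by metis
  hence "C0 \<subseteq> FR \<and> independent C0 \<and> FR \<subseteq> span C0 \<and> card C0 = dim FR" by blast
  hence h: "Cb \<subseteq> FR \<and> independent Cb \<and> FR \<subseteq> span Cb \<and> card Cb = dim FR"
    unfolding Cb_def by (rule someI)
  thus "Cb \<subseteq> FR" "independent Cb" "card Cb = dim FR" by auto
  show "span Cb = FR" using h FR_subspace by (metis real_vector.span_minimal real_vector.span_mono real_vector.span_eq_iff subset_antisym)
  show "finite Cb" using h independent_imp_finite by blast
qed

definition "Ls = (SOME l. distinct l \<and> set l = Cb)"

lemma Ls_props: "distinct Ls" "set Ls = Cb" "length Ls = dim FR"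
proof -
  have "\<exists>l. distinct l \<and> set l = Cb" using finite_distinct_list[OF C_props(5)] by metis
  hence h: "distinct Ls \<and> set Ls = Cb" unfolding Ls_def by (rule someI_ex)
  thus "distinct Ls" "set Ls = Cb" by auto
  thus "length Ls = dim FR" using distinct_card C_props(4) by metis
qed

lemma Ls_bij: "bij_betw (nth Ls) {..<length Ls} Cb"
  by (rule bij_betw_nth) (auto simp: Ls_props)

lemma sum_Ls: "(\<Sum>v\<in>Cb. h v) = (\<Sum>j<length Ls. h (Ls ! j))"
  using sum.reindex_bij_betw[OF Ls_bij, of h] by simp

lemma Ls_in: "j < length Ls \<Longrightarrow> Ls ! j \<in> FR"
  using C_props(1) Ls_props(2) nth_mem by blast

definition "idx v = inv_into {..<length Ls} (nth Ls) v"

lemma idx_nth: "j < length Ls \<Longrightarrow> idx (Ls ! j) = j"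
  unfolding idx_def using Ls_bij by (simp add: bij_betw_def inv_into_f_f)

lemma Lapp_inj: "inj_on (Lapp Ls) {\<theta>. length \<theta> = length Ls}"
proof (rule inj_onI)
  fix t1 t2 assume t1: "t1 \<in> {\<theta>. length \<theta> = length Ls}" and t2: "t2 \<in> {\<theta>. length \<theta> = length Ls}"
    and e: "Lapp Ls t1 = Lapp Ls t2"
  let ?u = "\<lambda>v. t1 ! idx v - t2 ! idx v"
  have "(\<Sum>v\<in>Cb. ?u v *\<^sub>R v) = (\<Sum>j<length Ls. (t1 ! j - t2 ! j) *\<^sub>R Ls ! j)"
    unfolding sum_Ls by (intro sum.cong refl) (simp add: idx_nth)
  also have "\<dots> = Lapp Ls t1 - Lapp Ls t2"
    unfolding Lapp_def by (simp add: scaleR_diff_left sum_subtractf)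
  finally have "(\<Sum>v\<in>Cb. ?u v *\<^sub>R v) = 0" using e by simp
  hence z: "\<forall>v\<in>Cb. ?u v = 0" using real_vector.independentD[OF C_props(2) C_props(5) subset_refl, where u="?u"] by blast
  show "t1 = t2"
  proof (rule nth_equalityI)
    show "length t1 = length t2" using t1 t2 by simp
    fix j assume "j < length t1"
    hence j: "j < length Ls" using t1 by simp
    hence "Ls ! j \<in> Cb" using Ls_props(2) nth_mem by blast
    thus "t1 ! j = t2 ! j" using z idx_nth[OF j] by fastforce
  qed
qed

lemma RanL_FR: "RanL Ls \<subseteq> FR"
proof
  fix w assume "w \<in> RanL Ls"
  then obtain \<theta> where w: "w = Lapp Ls \<theta>" unfolding RanL_def by blast
  show "w \<in> FR" unfolding w Lapp_def
    by (intro real_vector.subspace_sum[OF FR_subspace] real_vector.subspace_scale[OF FR_subspace] Ls_in) auto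
qed

lemma Ltrans_iff: "Ltrans Ls x = replicate (length Ls) 0 \<longleftrightarrow> x \<in> l1"
proof -
  have "Ltrans Ls x = replicate (length Ls) 0 \<longleftrightarrow> (\<forall>v\<in>Cb. bil (cvec v) x = 0)"
    unfolding Ltrans_def using map_eq_replicate_iff[of "\<lambda>c. bil (cvec c) x" Ls] Ls_props(2) by simp
  also have "\<dots> \<longleftrightarrow> x \<in> l1"
  proof
    assume a: "\<forall>v\<in>Cb. bil (cvec v) x = 0"
    hence o: "\<forall>v\<in>Cb. inner v (revec x) = 0 \<and> inner v (imvec x) = 0"
      unfolding bil_cvec by (simp add: complex_eq_iff)
    have "orthogonal r (revec x) \<and> orthogonal r (imvec x)" if "r \<in> FR" for r
    proof -
      have rs: "r \<in> span Cb" using that C_props(3) by simp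
      have "orthogonal (revec x) r" using orthogonal_to_span[OF rs, of "revec x"] o
        unfolding orthogonal_def by (simp add: inner_commute)
      moreover have "orthogonal (imvec x) r" using orthogonal_to_span[OF rs, of "imvec x"] o
        unfolding orthogonal_def by (simp add: inner_commute)
      ultimately show ?thesis by (simp add: orthogonal_commute)
    qed
    thus "x \<in> l1" unfolding l1_char VR_def by blast
  next
    assume "x \<in> l1"
    thus "\<forall>v\<in>Cb. bil (cvec v) x = 0"
      using C_props(1) l1_F unfolding FR_def by (auto simp: bil_sym)
  qed
  finally show ?thesis .
qed

lemma Lappc_F: "{Lappc Ls \<theta> | \<theta>. length \<theta> = length Ls} = F"
proof (intro set_eqI iffI)
  fix \<xi> assume "\<xi> \<in> {Lappc Ls \<theta> | \<theta>. length \<theta> = length Ls}"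
  then obtain \<theta> where "\<xi> = Lappc Ls \<theta>" by blast
  thus "\<xi> \<in> F" unfolding Lappc_def
    using Ls_in unfolding FR_def by (auto intro!: F_sum F_scale)
next
  fix \<xi> assume xF: "\<xi> \<in> F"
  have "revec \<xi> \<in> span Cb" "imvec \<xi> \<in> span Cb" using xF F_char C_props(3) by auto
  then obtain a b where a: "revec \<xi> = (\<Sum>v\<in>Cb. a v *\<^sub>R v)" and b: "imvec \<xi> = (\<Sum>v\<in>Cb. b v *\<^sub>R v)"
    using real_vector.span_finite[OF C_props(5)] by (metis (no_types, lifting) imageE)
  define \<theta> where "\<theta> = map (\<lambda>v. Complex (a v) (b v)) Ls"
  have "Lappc Ls \<theta> = (\<Sum>j<length Ls. Complex (a (Ls!j)) (b (Ls!j)) *s cvec (Ls!j))"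
    unfolding Lappc_def \<theta>_def by simp
  also have "\<dots> = (\<Sum>v\<in>Cb. Complex (a v) (b v) *s cvec v)" unfolding sum_Ls ..
  also have "\<dots> = \<xi>"
  proof (subst vec_eq_iff, intro allI)
    fix i
    have r: "Re (\<xi> $ i) = (\<Sum>v\<in>Cb. a v * v $ i)"
      using arg_cong[OF a, of "\<lambda>v. v $ i"] by (simp add: sum_component)
    have m: "Im (\<xi> $ i) = (\<Sum>v\<in>Cb. b v * v $ i)"
      using arg_cong[OF b, of "\<lambda>v. v $ i"] by (simp add: sum_component)
    show "(\<Sum>v\<in>Cb. Complex (a v) (b v) *s cvec v) $ i = \<xi> $ i"
      using r m by (simp add: sum_component complex_eq_iff)
  qed
  finally show "\<xi> \<in> {Lappc Ls \<theta> | \<theta>. length \<theta> = length Ls}" unfolding \<theta>_def by auto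
qed

end



lemma (in PL) G_l1: "G x \<in> l1"
  unfolding G_def using B_props(7) cvecB_l1 by (intro l1_sum l1_scale) auto

theorem proposition4p4:
  fixes \<Lambda> :: "((complex^'n) \<times> (complex^'n)) set"
  assumes "positive_lagrangian \<Lambda>"
  defines "k \<equiv> cdim (fst ` \<Lambda>)"
  defines "N \<equiv> CARD('n) - k"
  shows "\<exists>Q :: complex^'n^'n.
     (\<forall>x :: real^'n. 0 \<le> Im (quad Q (cvec x))) \<and>
     (k = CARD('n) \<longrightarrow> \<Lambda> = {(x, grad Q x) | x. True}) \<and>
     (k < CARD('n) \<longrightarrow>
        (\<exists>L :: (real^'n) list. length L = N \<and>
           inj_on (Lapp L) {\<theta>. length \<theta> = N} \<and>
           (\<forall>v\<in>range (grad Q). \<forall>w\<in>RanL L. inner (revec v) w = 0 \<and> inner (imvec v) w = 0) \<and>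
           \<Lambda> = {(x, grad Q x + Lappc L \<theta>) | x \<theta>.
                  length \<theta> = N \<and> Ltrans L x = replicate N 0}))"
proof -
  interpret P: PL \<Lambda> by (rule PL.intro) (fact assms(1))
  have kv: "k = dim P.VR" unfolding k_def using P.cdim_l1 by (simp add: P.l1_def)
  have Nv: "N = dim P.FR" using P.dimsum unfolding N_def kv by simp
  have NL: "length P.Ls = N" using P.Ls_props(3) Nv by simp
  show ?thesis
  proof (intro exI[of _ P.Qm] conjI impI allI)
    fix x :: "real^'n"
    show "0 \<le> Im (quad P.Qm (cvec x))" by (rule P.quad_pos)
  next
    assume "k = CARD('n)"
    hence "dim P.FR = 0" using P.dimsum kv by simp
    hence FR0: "P.FR \<subseteq> {0}" by (simp add: dim_eq_0)
    have F0: "P.F = {0}"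
    proof (intro set_eqI iffI)
      fix \<xi> assume "\<xi> \<in> P.F"
      hence z: "revec \<xi> = 0" "imvec \<xi> = 0" using P.F_char FR0 by auto
      have "\<xi> = cvec (revec \<xi>) + \<i> *s cvec (imvec \<xi>)" by (rule cvec_revec_imvec)
      also have "\<dots> = 0" unfolding z by simp
      finally show "\<xi> \<in> {0}" by simp
    next
      fix \<xi> assume "\<xi> \<in> (({0}) :: (complex^'n) set)"
      thus "\<xi> \<in> P.F" using P.F_0 by simp
    qed
    have l1U: "x \<in> P.l1" for x
      unfolding P.l1_char P.VR_def using FR0 by (auto simp: orthogonal_def)
    have "{(x, P.G x + f) | x f. x \<in> P.l1 \<and> f \<in> P.F} = {(x, grad P.Qm x) | x. True}"
      using l1U F0 by (auto simp: P.grad_Qm)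
    thus "\<Lambda> = {(x, grad P.Qm x) | x. True}" by (rule trans[OF P.Lam_char])
  next
    assume "k < CARD('n)"
    show "\<exists>L :: (real^'n) list. length L = N \<and>
           inj_on (Lapp L) {\<theta>. length \<theta> = N} \<and>
           (\<forall>v\<in>range (grad P.Qm). \<forall>w\<in>RanL L. inner (revec v) w = 0 \<and> inner (imvec v) w = 0) \<and>
           \<Lambda> = {(x, grad P.Qm x + Lappc L \<theta>) | x \<theta>.
                  length \<theta> = N \<and> Ltrans L x = replicate N 0}"
    proof (intro exI[of _ P.Ls] conjI)
      show "length P.Ls = N" by (fact NL)
      show "inj_on (Lapp P.Ls) {\<theta>. length \<theta> = N}" using P.Lapp_inj NL by simp
      show "\<forall>v\<in>range (grad P.Qm). \<forall>w\<in>RanL P.Ls. inner (revec v) w = 0 \<and> inner (imvec v) w = 0"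
      proof (intro ballI)
        fix v w assume v: "v \<in> range (grad P.Qm)" and w: "w \<in> RanL P.Ls"
        obtain x where "v = grad P.Qm x" using v by blast
        hence vx: "v = P.G x" by (simp only: P.grad_Qm)
        have "revec v \<in> P.VR" "imvec v \<in> P.VR" using P.G_l1[of x] P.l1_char vx by auto
        moreover have "w \<in> P.FR" using w P.RanL_FR by blast
        ultimately show "inner (revec v) w = 0 \<and> inner (imvec v) w = 0"
          unfolding P.VR_def orthogonal_def by (simp add: inner_commute)
      qed
      show "\<Lambda> = {(x, grad P.Qm x + Lappc P.Ls \<theta>) | x \<theta>. length \<theta> = N \<and> Ltrans P.Ls x = replicate N 0}"
      proof (rule trans[OF P.Lam_char], intro set_eqI iffI)
        fix X assume "X \<in> {(x, P.G x + f) | x f. x \<in> P.l1 \<and> f \<in> P.F}"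
        then obtain x f where X: "X = (x, P.G x + f)" and xl: "x \<in> P.l1" and f: "f \<in> P.F" by blast
        have "f \<in> {Lappc P.Ls \<theta> | \<theta>. length \<theta> = length P.Ls}" using f P.Lappc_F by simp
        then obtain \<theta> where "f = Lappc P.Ls \<theta>" "length \<theta> = N" using NL by blast
        moreover have "Ltrans P.Ls x = replicate N 0" using P.Ltrans_iff xl NL by simp
        ultimately show "X \<in> {(x, grad P.Qm x + Lappc P.Ls \<theta>) | x \<theta>. length \<theta> = N \<and> Ltrans P.Ls x = replicate N 0}"
          unfolding P.grad_Qm using X by blast
      next
        fix X assume "X \<in> {(x, grad P.Qm x + Lappc P.Ls \<theta>) | x \<theta>. length \<theta> = N \<and> Ltrans P.Ls x = replicate N 0}"
        then obtain x \<theta> where X: "X = (x, grad P.Qm x + Lappc P.Ls \<theta>)" and t: "length \<theta> = N"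
          and lt: "Ltrans P.Ls x = replicate N 0" by blast
        have "x \<in> P.l1" using P.Ltrans_iff lt NL by simp
        moreover have "Lappc P.Ls \<theta> \<in> {Lappc P.Ls \<theta> | \<theta>. length \<theta> = length P.Ls}"
          by (rule CollectI, rule exI[of _ \<theta>]) (simp add: t NL)
        hence "Lappc P.Ls \<theta> \<in> P.F" using P.Lappc_F by simp
        moreover have "X = (x, P.G x + Lappc P.Ls \<theta>)" using X by (simp only: P.grad_Qm)
        ultimately show "X \<in> {(x, P.G x + f) | x f. x \<in> P.l1 \<and> f \<in> P.F}"
          by blast
      qed
    qed
  qed
qed


end
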